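(* For a given policy $\pi$ and goal $s_g$, the Wasserstein distance of the state visitation measure of $\pi$ from the goal distribution $\rho_g=\delta(s_g)$ under the ground metric $d^\pi_T$ can be written as $$W_1^\pi(\rho_\pi,\rho_g)=\mathop{\mathbb{E}}_{s_0\sim\rho_0}\left[h\big(d^\pi_T(s_0,s_g)\big)+\frac{\gamma}{1-\gamma}\big(\Delta^\pi_{\text{Jensen}}(s_0)-1\big)\right],$$ where $h$ is an increasing function of $d^\pi_T$.
   Context: A goal-conditioned MDP has discrete state space $\mathcal{S}$, discrete actions, goal-dependent transitions $P(\cdot\mid s,a,s_g)$, start-state distribution $\rho_0$, and discount $\gamma\in[0,1)$; reward is $\mathbb{I}[s_{t+1}=s_g]$ and the episode enters an absorbing zero-reward state after reaching $s_g$. For a policy $\pi$, $T(s_g\mid\pi,s)$ is the first time-step at which $s_g$ is encountered starting from $s$ and following $\pi$; $d^\pi_T(s,s_g):=\mathbb{E}[T(s_g\mid\pi,s)]$ is the time-step quasimetric, and $V^\pi(s\mid s_g)=\mathbb{E}[\gamma^{T(s_g\mid\pi,s)}]$. The Jensen gap is $\Delta^\pi_{\text{Jensen}}(s):=V^\pi(s\mid s_g)-\gamma^{d^\pi_T(s,s_g)}$. The goal-conditioned state visitation distribution is $\rho_\pi(s\mid s_g)=\mathbb{E}_{s_0\sim\rho_0}\big[(1-\gamma)\sum_{t=0}^\infty\gamma^t P(s_t=s\mid\pi,s_g)\big]$, and $\rho_g=\delta(s_g)$ is the Dirac measure at the goal. The Wasserstein-1 distance under ground quasimetric $d^\pi_T$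 is $W_1^\pi(\rho_\pi,\rho_g)=\sum_{s\in\mathcal{S}}\rho_\pi(s\mid s_g)\,d^\pi_T(s,s_g)$. *)

theory Defs
  imports "HOL-Probability.Probability"
begin

text \<open>Once the goal sg is reached the episode is absorbed there (zero reward
  afterwards), so the induced state chain stays at sg.\<close>

definition pol_kernel ::
  "('s \<Rightarrow> 'a \<Rightarrow> 's \<Rightarrow> 's pmf) \<Rightarrow> ('s \<Rightarrow> 's \<Rightarrow> 'a pmf) \<Rightarrow> 's \<Rightarrow> 's \<Rightarrow> 's pmf" where
  "pol_kernel P pol sg s =
     (if s = sg then return_pmf sg else bind_pmf (pol s sg) (\<lambda>a. P s a sg))"

text \<open>first_hit_prob P pol sg s n = Prob[ T(sg | pol, s) = n ], the probability that
  the goal is first encountered at time step n when starting from s.\<close>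
fun first_hit_prob ::
  "('s::finite \<Rightarrow> 'a \<Rightarrow> 's \<Rightarrow> 's pmf) \<Rightarrow> ('s \<Rightarrow> 's \<Rightarrow> 'a pmf) \<Rightarrow> 's \<Rightarrow> 's \<Rightarrow> nat \<Rightarrow> real" where
  "first_hit_prob P pol sg s 0 = (if s = sg then 1 else 0)"
| "first_hit_prob P pol sg s (Suc n) =
     (if s = sg then 0
      else (\<Sum>s'\<in>UNIV. pmf (pol_kernel P pol sg s) s' * first_hit_prob P pol sg s' n))"

fun state_prob ::
  "('s::finite \<Rightarrow> 'a \<Rightarrow> 's \<Rightarrow> 's pmf) \<Rightarrow> ('s \<Rightarrow> 's \<Rightarrow> 'a pmf) \<Rightarrow> 's \<Rightarrow> nat \<Rightarrow> 's \<Rightarrow> 's \<Rightarrow> real" where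
  "state_prob P pol sg 0 s0 s = (if s = s0 then 1 else 0)"
| "state_prob P pol sg (Suc t) s0 s =
     (\<Sum>s'\<in>UNIV. state_prob P pol sg t s0 s' * pmf (pol_kernel P pol sg s') s)"

definition dT ::
  "('s::finite \<Rightarrow> 'a \<Rightarrow> 's \<Rightarrow> 's pmf) \<Rightarrow> ('s \<Rightarrow> 's \<Rightarrow> 'a pmf) \<Rightarrow> 's \<Rightarrow> 's \<Rightarrow> real" where
  "dT P pol sg s = (\<Sum>n. real n * first_hit_prob P pol sg s n)"

definition Vfun ::
  "real \<Rightarrow> ('s::finite \<Rightarrow> 'a \<Rightarrow> 's \<Rightarrow> 's pmf) \<Rightarrow> ('s \<Rightarrow> 's \<Rightarrow> 'a pmf) \<Rightarrow> 's \<Rightarrow> 's \<Rightarrow> real" where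
  "Vfun \<gamma> P pol sg s = (\<Sum>n. \<gamma> ^ n * first_hit_prob P pol sg s n)"

definition jensen_gap ::
  "real \<Rightarrow> ('s::finite \<Rightarrow> 'a \<Rightarrow> 's \<Rightarrow> 's pmf) \<Rightarrow> ('s \<Rightarrow> 's \<Rightarrow> 'a pmf) \<Rightarrow> 's \<Rightarrow> 's \<Rightarrow> real" where
  "jensen_gap \<gamma> P pol sg s = Vfun \<gamma> P pol sg s - \<gamma> powr dT P pol sg s"

definition visitation ::
  "real \<Rightarrow> ('s::finite \<Rightarrow> 'a \<Rightarrow> 's \<Rightarrow> 's pmf) \<Rightarrow> ('s \<Rightarrow> 's \<Rightarrow> 'a pmf) \<Rightarrow> 's pmf \<Rightarrow> 's \<Rightarrow> 's \<Rightarrow> real" where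
  "visitation \<gamma> P pol rho0 sg s =
     (\<Sum>s0\<in>UNIV. pmf rho0 s0 * ((1 - \<gamma>) * (\<Sum>t. \<gamma> ^ t * state_prob P pol sg t s0 s)))"

text \<open>W_1^pol(rho_pi, delta(sg)) = sum_s rho_pi(s | sg) * d^pi_T(s, sg).\<close>
definition W1 ::
  "real \<Rightarrow> ('s::finite \<Rightarrow> 'a \<Rightarrow> 's \<Rightarrow> 's pmf) \<Rightarrow> ('s \<Rightarrow> 's \<Rightarrow> 'a pmf) \<Rightarrow> 's pmf \<Rightarrow> 's \<Rightarrow> real" where
  "W1 \<gamma> P pol rho0 sg = (\<Sum>s\<in>UNIV. visitation \<gamma> P pol rho0 sg s * dT P pol sg s)"

end

theory Submission
  imports Defs "HOL-Analysis.Analysis"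
begin

lemma lnstrict: "0 < (x::real) \<Longrightarrow> x \<noteq> 1 \<Longrightarrow> ln x < x - 1"
  by (metis ln_le_minus_one ln_eq_minus_one less_eq_real_def)

lemma powrle: "0 < (g::real) \<Longrightarrow> g < 1 \<Longrightarrow> 0 \<le> x \<Longrightarrow> g powr x \<le> 1"
  by (metis powr01_less_one less_eq_real_def powr_zero_eq_one)

lemma powr_lin: "0 < (g::real) \<Longrightarrow> g < 1 \<Longrightarrow> 0 \<le> d \<Longrightarrow> 1 - g powr d \<le> - d * ln g"
  by (smt (verit, best) ln_le_minus_one ln_powr mult_minus_left powr_nonneg_iff)

lemma h_mono:
  fixes \<gamma> :: real
  assumes "0 \<le> \<gamma>" "\<gamma> < 1"
  shows "strict_mono_on {0..} (\<lambda>x. x + \<gamma> / (1 - \<gamma>) * \<gamma> powr x)"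
proof (cases "\<gamma> = 0")
  case True
  then show ?thesis by (auto simp: strict_mono_on_def)
next
  case False
  then have g0: "0 < \<gamma>" using assms by auto
  show ?thesis
  proof (rule strict_mono_onI)
    fix x y :: real assume xy: "x \<in> {0..}" "y \<in> {0..}" "x < y"
    define d where "d = y - x"
    have d0: "0 < d" using xy d_def by auto
    have gy: "\<gamma> powr y = \<gamma> powr x * \<gamma> powr d" using d_def by (simp add: powr_add[symmetric])
    have gx: "\<gamma> powr x \<le> 1" using powrle[OF g0 assms(2)] xy by auto
    have gd: "\<gamma> powr d \<le> 1" using powrle[OF g0 assms(2)] d0 by auto
    have diff: "\<gamma> powr x - \<gamma> powr y \<le> 1 - \<gamma> powr d"
    proof -
      have "\<gamma> powr x - \<gamma> powr y = \<gamma> powr x * (1 - \<gamma> powr d)" using gy by (simp add: algebra_simps)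
      also have "\<dots> \<le> 1 * (1 - \<gamma> powr d)"
        by (rule mult_right_mono) (use gx gd in auto)
      finally show ?thesis by simp
    qed
    have lin: "1 - \<gamma> powr d \<le> - d * ln \<gamma>" using powr_lin[OF g0 assms(2)] d0 by auto
    have key: "\<gamma> * (- ln \<gamma>) < 1 - \<gamma>"
    proof -
      have "ln (1/\<gamma>) < 1/\<gamma> - 1" using lnstrict[of "1/\<gamma>"] g0 assms by auto
      then have "- ln \<gamma> < 1/\<gamma> - 1" using g0 by (simp add: ln_div)
      then have "\<gamma> * (- ln \<gamma>) < \<gamma> * (1/\<gamma> - 1)" using g0 by (rule mult_strict_left_mono)
      then show ?thesis using g0 by (simp add: algebra_simps)
    qed
    have c0: "0 < \<gamma> / (1 - \<gamma>)" using g0 assms by auto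
    have "\<gamma> / (1 - \<gamma>) * (\<gamma> powr x - \<gamma> powr y) \<le> \<gamma> / (1 - \<gamma>) * (- d * ln \<gamma>)"
      using diff lin c0 by (intro mult_left_mono) auto
    also have "\<dots> = d * (\<gamma> * (- ln \<gamma>) / (1 - \<gamma>))" by simp
    also have "\<dots> < d * 1"
    proof -
      have "\<gamma> * (- ln \<gamma>) / (1 - \<gamma>) < 1" using key assms by (simp add: field_simps)
      then show ?thesis using d0 by (rule mult_strict_left_mono)
    qed
    finally show "x + \<gamma> / (1 - \<gamma>) * \<gamma> powr x < y + \<gamma> / (1 - \<gamma>) * \<gamma> powr y"
      using d_def by (simp add: algebra_simps)
  qed
qed

lemma alg:
  fixes \<gamma> c d A B V :: real
  shows "\<gamma> < 1 \<Longrightarrow> d = 1 + A \<Longrightarrow> V = \<gamma> * B \<Longrightarrow> c = \<gamma> / (1 - \<gamma>) \<Longrightarrow>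
    d + c * (V - 1) = (1 - \<gamma>) * d + \<gamma> * (A + c * B - c * 1)"
  by (simp add: field_simps)

context
  fixes P :: "'s::finite \<Rightarrow> 'a \<Rightarrow> 's \<Rightarrow> 's pmf" and pol :: "'s \<Rightarrow> 's \<Rightarrow> 'a pmf" and sg :: 's
begin

abbreviation "K s s' \<equiv> pmf (pol_kernel P pol sg s) s'"
abbreviation "f s n \<equiv> first_hit_prob P pol sg s n"
abbreviation "p t s0 s \<equiv> state_prob P pol sg t s0 s"

lemma K_sg: "K sg s = (if s = sg then 1 else 0)"
  by (simp add: pol_kernel_def indicator_def)

lemma K_sum: "(\<Sum>s'\<in>UNIV. K s s') = 1"
  by (rule sum_pmf_eq_1) auto

lemma f_nonneg: "0 \<le> f s n"
  by (induction n arbitrary: s) (auto intro!: sum_nonneg mult_nonneg_nonneg)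

lemma p_nonneg: "0 \<le> p t s0 s"
  by (induction t arbitrary: s) (auto intro!: sum_nonneg mult_nonneg_nonneg)

lemma p_sum: "(\<Sum>s\<in>UNIV. p t s0 s) = 1"
proof (induction t)
  case 0 then show ?case by simp
next
  case (Suc t)
  have "(\<Sum>s\<in>UNIV. p (Suc t) s0 s) = (\<Sum>s'\<in>UNIV. p t s0 s' * (\<Sum>s\<in>UNIV. K s' s))"
  proof -
    have "(\<Sum>s\<in>UNIV. p (Suc t) s0 s) = (\<Sum>s\<in>UNIV. \<Sum>s'\<in>UNIV. p t s0 s' * K s' s)"
      by simp
    also have "\<dots> = (\<Sum>s'\<in>UNIV. \<Sum>s\<in>UNIV. p t s0 s' * K s' s)"
      by (rule sum.swap)
    also have "\<dots> = (\<Sum>s'\<in>UNIV. p t s0 s' * (\<Sum>s\<in>UNIV. K s' s))"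
      by (simp only: sum_distrib_left)
    finally show ?thesis .
  qed
  also have "\<dots> = 1" using Suc by (simp add: K_sum)
  finally show ?case .
qed

lemma p_le1: "p t s0 s \<le> 1"
proof -
  have "p t s0 s \<le> (\<Sum>s\<in>UNIV. p t s0 s)"
    by (rule member_le_sum) (auto simp: p_nonneg)
  then show ?thesis by (simp add: p_sum)
qed

lemma dT_sg: "dT P pol sg sg = 0"
proof -
  have "(\<lambda>n. real n * f sg n) = (\<lambda>n. 0)"
    by (rule ext, case_tac n) auto
  then show ?thesis by (simp add: dT_def)
qed

lemma V_sg: "Vfun \<gamma> P pol sg sg = 1"
proof -
  have "(\<lambda>n. \<gamma> ^ n * f sg n) = (\<lambda>n. if n = 0 then 1 else 0)"
    by (rule ext, case_tac n) auto
  moreover have "(\<lambda>n::nat. if n = 0 then 1 else 0::real) sums 1"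
    using sums_single[of 0 "\<lambda>_. 1::real"] by simp
  ultimately show ?thesis by (simp add: Vfun_def sums_unique[symmetric])
qed

lemma f_Suc: "s \<noteq> sg \<Longrightarrow> f s (Suc n) = (\<Sum>s'\<in>UNIV. K s s' * f s' n)"
  by simp

lemma dT_rec:
  assumes A: "\<forall>s. (\<lambda>n. f s n) sums 1 \<and> summable (\<lambda>n. real n * f s n)"
    and s: "s \<noteq> sg"
  shows "dT P pol sg s = 1 + (\<Sum>s'\<in>UNIV. K s s' * dT P pol sg s')"
proof -
  have e: "(\<lambda>n. real (Suc n) * f s (Suc n)) =
        (\<lambda>n. (\<Sum>s'\<in>UNIV. K s s' * (real n * f s' n)) + (\<Sum>s'\<in>UNIV. K s s' * f s' n))"
  proof (rule ext)
    fix n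
    show "real (Suc n) * f s (Suc n) =
        (\<Sum>s'\<in>UNIV. K s s' * (real n * f s' n)) + (\<Sum>s'\<in>UNIV. K s s' * f s' n)"
      unfolding f_Suc[OF s] sum.distrib[symmetric] sum_distrib_left
      by (rule sum.cong) (auto simp: algebra_simps)
  qed
  have s1: "(\<lambda>n. \<Sum>s'\<in>UNIV. K s s' * (real n * f s' n)) sums (\<Sum>s'\<in>UNIV. K s s' * dT P pol sg s')"
    by (rule sums_sum, rule sums_mult) (use A in \<open>auto simp: dT_def intro: summable_sums\<close>)
  have s2: "(\<lambda>n. \<Sum>s'\<in>UNIV. K s s' * f s' n) sums (\<Sum>s'\<in>UNIV. K s s' * 1)"
    by (rule sums_sum, rule sums_mult) (use A in auto)
  have "(\<lambda>n. real (Suc n) * f s (Suc n)) sums ((\<Sum>s'\<in>UNIV. K s s' * dT P pol sg s') + 1)"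
    unfolding e using sums_add[OF s1 s2] by (simp add: K_sum)
  then have "(\<lambda>n. real n * f s n) sums ((\<Sum>s'\<in>UNIV. K s s' * dT P pol sg s') + 1)"
    by (subst (asm) sums_Suc_iff[where f = "\<lambda>n. real n * f s n"]) simp
  then show ?thesis by (simp add: dT_def sums_unique[symmetric])
qed

lemma V_sums:
  assumes A: "\<forall>s. (\<lambda>n. f s n) sums 1 \<and> summable (\<lambda>n. real n * f s n)"
    and g: "0 \<le> \<gamma>" "\<gamma> < 1"
  shows "(\<lambda>n. \<gamma> ^ n * f s n) sums Vfun \<gamma> P pol sg s"
proof -
  have "summable (\<lambda>n. \<gamma> ^ n * f s n)"
  proof (rule summable_comparison_test)
    show "\<exists>N. \<forall>n\<ge>N. norm (\<gamma> ^ n * f s n) \<le> f s n"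
      using g by (auto simp: f_nonneg abs_mult intro!: mult_left_le_one_le power_le_one)
    show "summable (\<lambda>n. f s n)" using A sums_summable by blast
  qed
  then show ?thesis by (simp add: Vfun_def summable_sums)
qed

lemma V_rec:
  assumes A: "\<forall>s. (\<lambda>n. f s n) sums 1 \<and> summable (\<lambda>n. real n * f s n)"
    and g: "0 \<le> \<gamma>" "\<gamma> < 1"
    and s: "s \<noteq> sg"
  shows "Vfun \<gamma> P pol sg s = \<gamma> * (\<Sum>s'\<in>UNIV. K s s' * Vfun \<gamma> P pol sg s')"
proof -
  have e: "(\<lambda>n. \<gamma> ^ Suc n * f s (Suc n)) = (\<lambda>n. \<Sum>s'\<in>UNIV. K s s' * (\<gamma> * (\<gamma> ^ n * f s' n)))"
  proof (rule ext)
    fix n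
    show "\<gamma> ^ Suc n * f s (Suc n) = (\<Sum>s'\<in>UNIV. K s s' * (\<gamma> * (\<gamma> ^ n * f s' n)))"
      unfolding f_Suc[OF s] sum_distrib_left
      by (rule sum.cong) (auto simp: algebra_simps)
  qed
  have "(\<lambda>n. \<Sum>s'\<in>UNIV. K s s' * (\<gamma> * (\<gamma> ^ n * f s' n))) sums (\<Sum>s'\<in>UNIV. K s s' * (\<gamma> * Vfun \<gamma> P pol sg s'))"
    by (rule sums_sum, rule sums_mult, rule sums_mult) (rule V_sums[OF A g])
  then have "(\<lambda>n. \<gamma> ^ n * f s n) sums ((\<Sum>s'\<in>UNIV. K s s' * (\<gamma> * Vfun \<gamma> P pol sg s')) + 0)"
    unfolding e[symmetric] using s by (subst (asm) sums_Suc_iff[where f = "\<lambda>n. \<gamma> ^ n * f s n"]) simp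
  then have "Vfun \<gamma> P pol sg s = (\<Sum>s'\<in>UNIV. K s s' * (\<gamma> * Vfun \<gamma> P pol sg s'))"
    using sums_unique2[OF V_sums[OF A g]] by simp
  then show ?thesis by (simp add: sum_distrib_left algebra_simps)
qed

lemma horizon:
  assumes G: "\<And>s. g s = r s + \<gamma> * (\<Sum>s'\<in>UNIV. K s s' * g s')"
  shows "g s0 = (\<Sum>t<N. \<gamma> ^ t * (\<Sum>s\<in>UNIV. p t s0 s * r s)) + \<gamma> ^ N * (\<Sum>s\<in>UNIV. p N s0 s * g s)"
proof (induction N)
  case 0
  have "(\<Sum>s\<in>UNIV. (if s = s0 then 1 else 0) * g s) = (\<Sum>s\<in>UNIV. if s = s0 then g s else 0)"
    by (rule sum.cong) auto
  also have "\<dots> = g s0" by simp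
  finally show ?case by simp
next
  case (Suc N)
  have "(\<Sum>s\<in>UNIV. p (Suc N) s0 s * g s) = (\<Sum>s\<in>UNIV. \<Sum>s'\<in>UNIV. p N s0 s' * (K s' s * g s))"
    by (simp only: state_prob.simps sum_distrib_right mult.assoc)
  also have "\<dots> = (\<Sum>s'\<in>UNIV. \<Sum>s\<in>UNIV. p N s0 s' * (K s' s * g s))"
    by (rule sum.swap)
  also have "\<dots> = (\<Sum>s'\<in>UNIV. p N s0 s' * (\<Sum>s\<in>UNIV. K s' s * g s))"
    by (simp only: sum_distrib_left)
  finally have e1: "(\<Sum>s\<in>UNIV. p (Suc N) s0 s * g s) = (\<Sum>s'\<in>UNIV. p N s0 s' * (\<Sum>s\<in>UNIV. K s' s * g s))" .
  have "(\<Sum>s\<in>UNIV. p N s0 s * g s) = (\<Sum>s\<in>UNIV. p N s0 s * (r s + \<gamma> * (\<Sum>s'\<in>UNIV. K s s' * g s')))"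
    by (rule sum.cong[OF refl]) (metis G)
  also have "\<dots> = (\<Sum>s\<in>UNIV. p N s0 s * r s) + \<gamma> * (\<Sum>s'\<in>UNIV. p N s0 s' * (\<Sum>s\<in>UNIV. K s' s * g s))"
    by (simp only: sum_distrib_left distrib_left sum.distrib mult.left_commute)
  finally have e2: "(\<Sum>s\<in>UNIV. p N s0 s * g s) = (\<Sum>s\<in>UNIV. p N s0 s * r s) + \<gamma> * (\<Sum>s'\<in>UNIV. p N s0 s' * (\<Sum>s\<in>UNIV. K s' s * g s))" .
  have e3: "\<gamma> ^ N * (\<Sum>s\<in>UNIV. p N s0 s * g s) = \<gamma> ^ N * (\<Sum>s\<in>UNIV. p N s0 s * r s) + \<gamma> ^ Suc N * (\<Sum>s\<in>UNIV. p (Suc N) s0 s * g s)"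
    unfolding e1 e2 by (simp only: power_Suc distrib_left mult.assoc mult.left_commute)
  show ?case unfolding sum.lessThan_Suc using Suc.IH e3 by linarith
qed

lemma horizon_sums:
  assumes G: "\<And>s. g s = r s + \<gamma> * (\<Sum>s'\<in>UNIV. K s s' * g s')"
    and g: "0 \<le> \<gamma>" "\<gamma> < 1"
  shows "(\<lambda>t. \<gamma> ^ t * (\<Sum>s\<in>UNIV. p t s0 s * r s)) sums g s0"
proof -
  define M where "M = (\<Sum>s\<in>UNIV. \<bar>g s\<bar>)"
  have b: "norm (\<gamma> ^ N * (\<Sum>s\<in>UNIV. p N s0 s * g s)) \<le> \<gamma> ^ N * M" for N
  proof -
    have "\<bar>\<Sum>s\<in>UNIV. p N s0 s * g s\<bar> \<le> (\<Sum>s\<in>UNIV. \<bar>p N s0 s * g s\<bar>)" by (rule sum_abs)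
    also have "\<dots> \<le> M" unfolding M_def
    proof (rule sum_mono)
      fix s show "\<bar>p N s0 s * g s\<bar> \<le> \<bar>g s\<bar>"
        unfolding abs_mult by (rule mult_left_le_one_le) (auto simp: p_nonneg p_le1)
    qed
    finally have "\<bar>\<Sum>s\<in>UNIV. p N s0 s * g s\<bar> \<le> M" .
    then have "\<gamma> ^ N * \<bar>\<Sum>s\<in>UNIV. p N s0 s * g s\<bar> \<le> \<gamma> ^ N * M"
      by (rule mult_left_mono) (use g in simp)
    then show ?thesis using g by (simp add: abs_mult)
  qed
  have gN: "(\<lambda>N. \<gamma> ^ N) \<longlonglongrightarrow> 0"
    by (rule LIMSEQ_power_zero) (use g in simp)
  have "(\<lambda>N. \<gamma> ^ N * M) \<longlonglongrightarrow> 0 * M"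
    by (rule tendsto_mult[OF gN tendsto_const])
  have z: "(\<lambda>N. \<gamma> ^ N * (\<Sum>s\<in>UNIV. p N s0 s * g s)) \<longlonglongrightarrow> 0"
  proof (rule Lim_null_comparison[OF always_eventually])
    show "\<forall>N. norm (\<gamma> ^ N * (\<Sum>s\<in>UNIV. p N s0 s * g s)) \<le> \<gamma> ^ N * M" using b by blast
    show "(\<lambda>N. \<gamma> ^ N * M) \<longlonglongrightarrow> 0" using \<open>(\<lambda>N. \<gamma> ^ N * M) \<longlonglongrightarrow> 0 * M\<close> by simp
  qed
  have "(\<lambda>N. g s0 - \<gamma> ^ N * (\<Sum>s\<in>UNIV. p N s0 s * g s)) \<longlonglongrightarrow> g s0 - 0"
    by (intro tendsto_diff tendsto_const z)
  moreover have "(\<Sum>t<N. \<gamma> ^ t * (\<Sum>s\<in>UNIV. p t s0 s * r s)) = g s0 - \<gamma> ^ N * (\<Sum>s\<in>UNIV. p N s0 s * g s)" for N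
    using horizon[OF G, of s0 N] by linarith
  ultimately show ?thesis unfolding sums_def by simp
qed

end

theorem proposition3:
  fixes \<gamma> :: real
  assumes "0 \<le> \<gamma>" and "\<gamma> < 1"
  shows "\<exists>h :: real \<Rightarrow> real. strict_mono_on {0..} h \<and>
    (\<forall>(P :: 's::finite \<Rightarrow> 'a \<Rightarrow> 's \<Rightarrow> 's pmf) (pol :: 's \<Rightarrow> 's \<Rightarrow> 'a pmf) (rho0 :: 's pmf) sg.
       (\<forall>s. (\<lambda>n. first_hit_prob P pol sg s n) sums 1 \<and>
            summable (\<lambda>n. real n * first_hit_prob P pol sg s n)) \<longrightarrow>
       W1 \<gamma> P pol rho0 sg =
         (\<Sum>s0\<in>UNIV. pmf rho0 s0 *
            (h (dT P pol sg s0) + \<gamma> / (1 - \<gamma>) * (jensen_gap \<gamma> P pol sg s0 - 1))))"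
proof (intro exI conjI allI impI)
  show "strict_mono_on {0..} (\<lambda>x. x + \<gamma> / (1 - \<gamma>) * \<gamma> powr x)" by (rule h_mono[OF assms])
  fix P :: "'s::finite \<Rightarrow> 'a \<Rightarrow> 's \<Rightarrow> 's pmf" and pol :: "'s \<Rightarrow> 's \<Rightarrow> 'a pmf" and rho0 :: "'s pmf" and sg :: 's
  assume A: "\<forall>s. (\<lambda>n. first_hit_prob P pol sg s n) sums 1 \<and>
            summable (\<lambda>n. real n * first_hit_prob P pol sg s n)"
  define c where "c = \<gamma> / (1 - \<gamma>)"
  define d where "d = dT P pol sg"
  define V where "V = Vfun \<gamma> P pol sg"
  define g where "g s = d s + c * (V s - 1)" for s
  define r where "r s = (1 - \<gamma>) * d s" for s
  have G: "g s = r s + \<gamma> * (\<Sum>s'\<in>UNIV. pmf (pol_kernel P pol sg s) s' * g s')" for s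
  proof (cases "s = sg")
    case True
    have gs: "g sg = 0" by (simp add: g_def d_def V_def dT_sg V_sg)
    have "(\<Sum>s'\<in>UNIV. pmf (pol_kernel P pol sg sg) s' * g s') = (\<Sum>s'\<in>UNIV. if s' = sg then g s' else 0)"
      by (rule sum.cong) (auto simp: K_sg)
    then show ?thesis using True gs by (simp add: r_def d_def dT_sg)
  next
    case False
    let ?K = "\<lambda>s'. pmf (pol_kernel P pol sg s) s'"
    define A where "A = (\<Sum>s'\<in>UNIV. ?K s' * d s')"
    define B where "B = (\<Sum>s'\<in>UNIV. ?K s' * V s')"
    have dr: "d s = 1 + A"
      unfolding d_def A_def by (rule dT_rec[OF A False])
    have vr: "V s = \<gamma> * B"
      unfolding V_def B_def by (rule V_rec[OF A assms False])
    have "(\<Sum>s'\<in>UNIV. ?K s' * g s') = (\<Sum>s'\<in>UNIV. ?K s' * d s' + c * (?K s' * V s') - c * ?K s')"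
      by (rule sum.cong) (auto simp: g_def algebra_simps)
    also have "\<dots> = A + (\<Sum>s'\<in>UNIV. c * (?K s' * V s')) - (\<Sum>s'\<in>UNIV. c * ?K s')"
      unfolding A_def by (simp only: sum.distrib sum_subtractf)
    also have "\<dots> = A + c * B - c * 1"
      unfolding B_def by (simp only: sum_distrib_left[symmetric] K_sum)
    finally have e: "(\<Sum>s'\<in>UNIV. ?K s' * g s') = A + c * B - c * 1" .
    have "g s = r s + \<gamma> * (A + c * B - c * 1)" unfolding g_def r_def
      by (rule alg[OF assms(2) dr vr c_def])
    then show ?thesis using e by simp
  qed
  define S where "S s0 s = (\<Sum>t. \<gamma> ^ t * state_prob P pol sg t s0 s)" for s0 s
  have Ssums: "(\<lambda>t. \<gamma> ^ t * state_prob P pol sg t s0 s) sums S s0 s" for s0 s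
  proof -
    have "summable (\<lambda>t. \<gamma> ^ t * state_prob P pol sg t s0 s)"
    proof (rule summable_comparison_test)
      show "\<exists>N. \<forall>n\<ge>N. norm (\<gamma> ^ n * state_prob P pol sg n s0 s) \<le> \<gamma> ^ n"
        using assms by (auto simp: abs_mult p_nonneg p_le1 intro!: mult_left_le)
      show "summable (\<lambda>n. \<gamma> ^ n)" using assms by (auto intro: summable_geometric)
    qed
    then show ?thesis by (simp add: S_def summable_sums)
  qed
  have inner: "(\<Sum>s\<in>UNIV. (1 - \<gamma>) * S s0 s * d s) = g s0" for s0
  proof -
    have h1: "(\<lambda>t. \<Sum>s\<in>UNIV. \<gamma> ^ t * state_prob P pol sg t s0 s * r s) sums (\<Sum>s\<in>UNIV. S s0 s * r s)"
      by (rule sums_sum, rule sums_mult2, rule Ssums)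
    have eq: "(\<lambda>t. \<Sum>s\<in>UNIV. \<gamma> ^ t * state_prob P pol sg t s0 s * r s) =
        (\<lambda>t. \<gamma> ^ t * (\<Sum>s\<in>UNIV. state_prob P pol sg t s0 s * r s))"
      by (simp only: sum_distrib_left mult.assoc)
    have h2: "(\<lambda>t. \<gamma> ^ t * (\<Sum>s\<in>UNIV. state_prob P pol sg t s0 s * r s)) sums (\<Sum>s\<in>UNIV. S s0 s * r s)"
      using h1 unfolding eq .
    have "(\<Sum>s\<in>UNIV. S s0 s * r s) = g s0"
      by (rule sums_unique2[OF h2 horizon_sums[OF G assms]])
    moreover have "(\<Sum>s\<in>UNIV. (1 - \<gamma>) * S s0 s * d s) = (\<Sum>s\<in>UNIV. S s0 s * r s)"
      by (rule sum.cong) (simp_all add: r_def mult_ac)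
    ultimately show ?thesis by simp
  qed
  have "W1 \<gamma> P pol rho0 sg = (\<Sum>s\<in>UNIV. \<Sum>s0\<in>UNIV. pmf rho0 s0 * ((1 - \<gamma>) * S s0 s * d s))"
    by (simp add: W1_def visitation_def S_def d_def sum_distrib_right mult.assoc)
  also have "\<dots> = (\<Sum>s0\<in>UNIV. pmf rho0 s0 * (\<Sum>s\<in>UNIV. (1 - \<gamma>) * S s0 s * d s))"
    by (subst sum.swap) (simp only: sum_distrib_left)
  also have "\<dots> = (\<Sum>s0\<in>UNIV. pmf rho0 s0 * g s0)" by (simp add: inner)
  also have "\<dots> = (\<Sum>s0\<in>UNIV. pmf rho0 s0 *
            ((\<lambda>x. x + \<gamma> / (1 - \<gamma>) * \<gamma> powr x) (dT P pol sg s0) + \<gamma> / (1 - \<gamma>) * (jensen_gap \<gamma> P pol sg s0 - 1)))"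
    by (simp add: g_def c_def d_def V_def jensen_gap_def algebra_simps)
  finally show "W1 \<gamma> P pol rho0 sg = (\<Sum>s0\<in>UNIV. pmf rho0 s0 *
            ((\<lambda>x. x + \<gamma> / (1 - \<gamma>) * \<gamma> powr x) (dT P pol sg s0) + \<gamma> / (1 - \<gamma>) * (jensen_gap \<gamma> P pol sg s0 - 1)))" .
qed

end
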